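(* Let $w,z\in\mathbb{C}$ be such that neither $w$ nor $z$ is a non-positive integer and $w+z-\tfrac12\notin\mathbb{Z}$. Then the series below converges and $$\frac{1}{\sqrt{2\pi}}\,\frac{2^{w+z}\,\Gamma(w)\,\Gamma(z)}{1-\cot(\pi w)\cot(\pi z)}=\sum_{n=0}^{\infty}\frac{\Gamma\!\left(w+z-n-\tfrac12\right)}{2^n\,n!}\,\left(w-z-n+\tfrac12\right)_{2n},$$ where the factor $\dfrac{1}{1-\cot(\pi w)\cot(\pi z)}$ is to be read as $-\dfrac{\sin(\pi w)\sin(\pi z)}{\cos(\pi(w+z))}$ (the two expressions agree whenever $w,z\notin\mathbb{Z}$).
   Context: $\Gamma$ denotes Euler's gamma function. $(a)_k$ denotes the Pochhammer symbol (rising factorial): $(a)_0=1$ and $(a)_k=a(a+1)\cdots(a+k-1)$ for integers $k\ge 1$. *)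

theory Defs
  imports "HOL-Analysis.Analysis"
begin

end

theory Submission
  imports Defs "HOL-Real_Asymp.Real_Asymp"
begin

definition tt :: "complex \<Rightarrow> complex \<Rightarrow> nat \<Rightarrow> complex" where
  "tt a b n = pochhammer a n * pochhammer (1-a) n / (pochhammer b n * fact n * 2^n)"

lemma tt_0 [simp]: "tt a b 0 = 1" by (simp add: tt_def)

lemma tt_Suc: "tt a b (Suc n) = tt a b n *
   ((a + of_nat n) * (1 - a + of_nat n) / ((b + of_nat n) * (of_nat n + 1) * 2))"
proof -
  have gen: "\<And>A x B y P p F f T :: complex. A*x*(B*y)/(P*p*(f*F)*(2*T)) = A*B/(P*F*T) * (x*y/(p*f*2))"
    by (simp only: divide_inverse inverse_mult_distrib mult_ac)
  have "fact (Suc n) = (of_nat n + 1) * (fact n :: complex)" by (simp add: fact_Suc add_ac)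
  then show ?thesis unfolding tt_def pochhammer_Suc power_Suc
    by (simp only: gen add_diff_eq)
qed

lemma lim_ratio1: "(\<lambda>n. (p + of_nat n) / (q + of_nat n :: complex)) \<longlonglongrightarrow> 1"
proof -
  have "(\<lambda>n. (p / of_nat n + 1) / (q / of_nat n + 1)) \<longlonglongrightarrow> (0 + 1) / (0 + 1)"
    by (intro tendsto_intros) auto
  moreover have "eventually (\<lambda>n. (p / of_nat n + 1) / (q / of_nat n + 1) = (p + of_nat n) / (q + of_nat n :: complex)) sequentially"
    using eventually_gt_at_top[of 0]
  proof eventually_elim
    case (elim n)
    then have "of_nat n \<noteq> (0::complex)" by simp
    have 1: "p / of_nat n + 1 = (p + of_nat n) / of_nat n" "q / of_nat n + 1 = (q + of_nat n) / of_nat n"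
      using \<open>of_nat n \<noteq> (0::complex)\<close> by (simp_all add: field_simps)
    have c: "(x/c)/(y/c) = x/y" if "c\<noteq>0" for x y c :: complex
      using that by (simp add: divide_divide_times_eq mult.commute[of x])
    show ?case unfolding 1 using \<open>of_nat n \<noteq> (0::complex)\<close> by (rule c)
  qed
  ultimately show ?thesis by (simp add: tendsto_cong)
qed

lemma tt_ratio_lim: fixes a b :: complex shows "(\<lambda>n. (a + of_nat n) * (1 - a + of_nat n) / ((b + of_nat n) * (of_nat n + 1) * 2))
    \<longlonglongrightarrow> 1/2"
proof -
  have gen: "\<And>A X C D. A*C/(D*X*2) = (A/X)*(C/D)/(2::complex)"
    by (simp only: divide_inverse inverse_mult_distrib mult_ac)
  have l1: "(\<lambda>n. (a + of_nat n) / (of_nat n + 1)) \<longlonglongrightarrow> 1"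
    using lim_ratio1[of a 1] by (simp only: add.commute)
  have "(\<lambda>n. ((a + of_nat n) / (of_nat n + 1)) * ((1 - a + of_nat n) / (b + of_nat n)) / 2) \<longlonglongrightarrow> 1 * 1 / 2"
    by (intro tendsto_intros lim_ratio1 l1) simp
  then show ?thesis by (simp only: gen mult_1)
qed

lemma ratio_summable:
  fixes f r :: "nat \<Rightarrow> complex"
  assumes "\<And>n. f (Suc n) = f n * r n" "r \<longlonglongrightarrow> 1/2"
  shows "summable (\<lambda>n. norm (f n))"
proof -
  have "(\<lambda>n. norm (r n)) \<longlonglongrightarrow> norm (1/2 :: complex)" by (intro tendsto_intros assms)
  then have "eventually (\<lambda>n. norm (r n) < 3/4) sequentially"
    by (rule order_tendstoD) simp
  then obtain N where N: "\<And>n. n \<ge> N \<Longrightarrow> norm (r n) < 3/4" by (auto simp: eventually_at_top_linorder)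
  show ?thesis
  proof (rule summable_ratio_test[of "3/4" N])
    fix n assume "n \<ge> N"
    then have "norm (f n) * norm (r n) \<le> norm (f n) * (3/4)"
      using N by (intro mult_left_mono) (auto simp: less_imp_le)
    then show "norm (norm (f (Suc n))) \<le> 3/4 * norm (norm (f n))" by (simp add: assms norm_mult mult_ac)
  qed simp
qed

lemma tt_norm_summable: "summable (\<lambda>n. norm (tt a b n))"
  by (rule ratio_summable[OF tt_Suc tt_ratio_lim])

lemma tt_summable: "summable (tt a b)"
  by (rule summable_norm_cancel[OF tt_norm_summable])

lemma poch_nz: "b \<notin> \<int>\<^sub>\<le>\<^sub>0 \<Longrightarrow> b + of_nat n \<noteq> (0::complex)"
  using plus_of_nat_eq_0_imp by blast

lemma tt_shift2:
  assumes b: "b \<notin> \<int>\<^sub>\<le>\<^sub>0"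
  shows "tt a (b+2) n = tt a b n * (b * (b+1) / ((b + of_nat n) * (b + of_nat n + 1)))"
proof -
  have "pochhammer b (2 + n) = pochhammer b (n + 2)" by (simp add: add.commute)
  then have e: "b * (b+1) * pochhammer (b+2) n = pochhammer b n * ((b + of_nat n) * (b + of_nat n + 1))"
    unfolding pochhammer_product' by (simp add: numeral_2_eq_2 pochhammer_Suc algebra_simps)
  have nz: "pochhammer b n \<noteq> 0" "b + of_nat n \<noteq> 0" "b + of_nat n + 1 \<noteq> 0" "b \<noteq> 0" "b + 1 \<noteq> 0"
    using b poch_nz[OF b, of n] poch_nz[OF b, of "Suc n"] poch_nz[OF b, of 0] poch_nz[OF b, of 1]
    by (auto simp: pochhammer_eq_0_iff add_ac)
  have P2: "pochhammer (b+2) n = pochhammer b n * ((b + of_nat n) * (b + of_nat n + 1)) / (b * (b+1))"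
    using e nz by (metis (no_types, lifting) mult_eq_0_iff nonzero_mult_div_cancel_left)
  have gen: "\<And>A P Q B f t :: complex. A / (P*Q/B*f*t) = A/(P*f*t)*(B/Q)"
    by (simp only: divide_inverse inverse_mult_distrib mult_ac inverse_inverse_eq)
  show ?thesis unfolding tt_def P2 gen ..
qed

lemma key_alg:
  fixes a b m :: complex
  assumes "b + m \<noteq> 0" "b + m + 1 \<noteq> 0" "m + 1 \<noteq> 0"
  shows "-2 * ((m + 1) / (b + m + 1)) * ((a + m) * (1 - a + m) / ((b + m) * (m + 1) * 2))
        - (-2 * (m / (b + m))) = 1 - (a+b) * (1-a+b) / ((b + m) * (b + m + 1))"
proof -
  have h: "(b+m) * inverse (b+m) = 1" "(b+m+1) * inverse (b+m+1) = 1" "(m+1) * inverse (m+1) = 1"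
      "2 * inverse 2 = (1::complex)"
    using assms by simp_all
  show ?thesis unfolding divide_inverse inverse_mult_distrib using h by algebra
qed

lemma tt_recur:
  assumes b: "b \<notin> \<int>\<^sub>\<le>\<^sub>0"
  shows "b * (b+1) * suminf (tt a b) = (a+b) * (1-a+b) * suminf (tt a (b+2))"
proof -
  define G where "G n = -2 * (of_nat n / (b + of_nat n)) * tt a b n" for n
  have nzb: "b \<noteq> 0" "b + 1 \<noteq> 0" using poch_nz[OF b, of 0] poch_nz[OF b, of 1] by auto
  define \<rho> where "\<rho> = (a+b) * (1-a+b) / (b * (b+1))"
  have key: "G (Suc n) - G n = tt a b n - \<rho> * tt a (b+2) n" for n
  proof -
    have nz: "b + of_nat n \<noteq> 0" "b + of_nat n + 1 \<noteq> 0"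
      using poch_nz[OF b, of n] poch_nz[OF b, of "Suc n"] by (auto simp: add_ac)
    have "of_nat (Suc n) \<noteq> (0::complex)" by (simp only: of_nat_eq_0_iff)
    then have nz3: "of_nat n + 1 \<noteq> (0::complex)" by (metis of_nat_Suc add.commute)
    have id: "-2 * ((1 + of_nat n) / (b + (1 + of_nat n))) *
        ((a + of_nat n) * (1 - a + of_nat n) / ((b + of_nat n) * (of_nat n + 1) * 2))
        - (-2 * (of_nat n / (b + of_nat n)))
      = 1 - \<rho> * (b * (b+1) / ((b + of_nat n) * (b + of_nat n + 1)))"
      using key_alg[OF nz nz3, of a] nzb unfolding \<rho>_def by (simp add: add_ac)
    have gen: "\<And>X Y t r::complex. -2*X*(t*r) - (-2*Y*t) = t*(-2*X*r - (-2*Y))" by algebra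
    have "G (Suc n) - G n = tt a b n * (-2 * ((1 + of_nat n) / (b + (1 + of_nat n))) *
        ((a + of_nat n) * (1 - a + of_nat n) / ((b + of_nat n) * (of_nat n + 1) * 2))
        - (-2 * (of_nat n / (b + of_nat n))))"
      unfolding G_def tt_Suc of_nat_Suc by (rule gen)
    also have "\<dots> = tt a b n - \<rho> * tt a (b+2) n"
      unfolding id tt_shift2[OF b] by (simp add: algebra_simps)
    finally show ?thesis .
  qed
  have "G \<longlonglongrightarrow> -2 * 1 * 0"
    unfolding G_def using lim_ratio1[of 0 b]
    by (intro tendsto_intros summable_LIMSEQ_zero tt_summable) simp_all
  then have "(\<lambda>n. G (Suc n) - G n) sums (0 - G 0)" by (intro telescope_sums) simp
  then have s0: "(\<lambda>n. tt a b n - \<rho> * tt a (b+2) n) sums 0" unfolding key by (simp add: G_def)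
  have s1: "(\<lambda>n. tt a b n - \<rho> * tt a (b+2) n) sums (suminf (tt a b) - \<rho> * suminf (tt a (b+2)))"
    by (intro sums_diff sums_mult summable_sums tt_summable)
  have "suminf (tt a b) - \<rho> * suminf (tt a (b+2)) = 0" using sums_unique2[OF s1 s0] .
  moreover have "b * (b+1) * inverse (b * (b+1)) = 1" using nzb by (simp del: inverse_mult_distrib)
  ultimately show ?thesis unfolding \<rho>_def divide_inverse by algebra
qed

definition FF where "FF a b = suminf (tt a b)"

lemma FF_iter:
  assumes b: "b \<notin> \<int>\<^sub>\<le>\<^sub>0"
  shows "pochhammer (b/2) K * pochhammer ((b+1)/2) K * FF a b =
         pochhammer ((a+b)/2) K * pochhammer ((1-a+b)/2) K * FF a (b + 2 * of_nat K)"
proof (induction K)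
  case 0
  then show ?case by simp
next
  case (Suc K)
  define b' where "b' = b + 2 * of_nat K"
  have b': "b' \<notin> \<int>\<^sub>\<le>\<^sub>0"
  proof
    assume "b' \<in> \<int>\<^sub>\<le>\<^sub>0"
    then have "b' - of_nat (2*K) \<in> \<int>\<^sub>\<le>\<^sub>0" by (rule nonpos_Ints_diff_Nats) simp
    then show False using b by (simp add: b'_def)
  qed
  have rec: "b' * (b'+1) * FF a b' = (a+b') * (1-a+b') * FF a (b'+2)"
    unfolding FF_def by (rule tt_recur[OF b'])
  have e1: "b' + 2 = b + 2 * of_nat (Suc K)" by (simp add: b'_def algebra_simps)
  have e2: "(b/2 + of_nat K) * ((b+1)/2 + of_nat K) = b' * (b'+1) / 4"
    by (simp add: b'_def field_simps)
  have e3: "((a+b)/2 + of_nat K) * ((1-a+b)/2 + of_nat K) = (a+b') * (1-a+b') / 4"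
    by (simp add: b'_def field_simps)
  have "pochhammer (b/2) (Suc K) * pochhammer ((b+1)/2) (Suc K) * FF a b
      = (b/2 + of_nat K) * ((b+1)/2 + of_nat K) * (pochhammer (b/2) K * pochhammer ((b+1)/2) K * FF a b)"
    by (simp add: pochhammer_Suc mult_ac)
  also have "\<dots> = (b/2 + of_nat K) * ((b+1)/2 + of_nat K) * (pochhammer ((a+b)/2) K * pochhammer ((1-a+b)/2) K * FF a b')"
    by (simp add: Suc.IH b'_def)
  also have "\<dots> = pochhammer ((a+b)/2) K * pochhammer ((1-a+b)/2) K * (b' * (b'+1) * FF a b') / 4"
    unfolding e2 by (simp add: mult_ac)
  also have "\<dots> = pochhammer ((a+b)/2) K * pochhammer ((1-a+b)/2) K * ((a+b') * (1-a+b') / 4) * FF a (b'+2)"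
    unfolding rec by (simp add: mult_ac)
  also have "\<dots> = pochhammer ((a+b)/2) (Suc K) * pochhammer ((1-a+b)/2) (Suc K) * FF a (b + 2 * of_nat (Suc K))"
    unfolding e3[symmetric] e1 by (simp add: pochhammer_Suc mult_ac)
  finally show ?case .
qed

lemma poch_lower:
  assumes "Re c \<ge> 1"
  shows "norm (pochhammer c (Suc n)) \<ge> Re c * fact (Suc n)"
proof (induction n)
  case 0
  then show ?case using complex_Re_le_cmod[of c] by simp
next
  case (Suc n)
  have "Re c + of_nat (Suc n) \<le> norm (c + of_nat (Suc n))"
    using complex_Re_le_cmod[of "c + of_nat (Suc n)"] by simp
  moreover have "of_nat (Suc (Suc n)) \<le> Re c + of_nat (Suc n)" using assms by simp
  ultimately have h: "of_nat (Suc (Suc n)) \<le> norm (c + of_nat (Suc n))" by linarith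
  have "Re c * fact (Suc (Suc n)) = (Re c * fact (Suc n)) * of_nat (Suc (Suc n))"
    by (simp add: fact_Suc[of "Suc n"] mult_ac)
  also have "\<dots> \<le> norm (pochhammer c (Suc n)) * norm (c + of_nat (Suc n))"
    using Suc.IH h assms by (intro mult_mono) auto
  also have "\<dots> = norm (pochhammer c (Suc (Suc n)))"
    by (simp add: pochhammer_Suc[of c "Suc n"] norm_mult)
  finally show ?case .
qed

lemma tt_bound:
  assumes R: "Re c \<ge> 1"
  shows "norm (tt a c (Suc n)) \<le> norm (tt a 1 (Suc n)) / Re c"
proof -
  define A where "A = norm (pochhammer a (Suc n) * pochhammer (1-a) (Suc n))"
  have 1: "norm (tt a c (Suc n)) = A / (norm (pochhammer c (Suc n)) * fact (Suc n) * 2 ^ Suc n)"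
    unfolding tt_def A_def by (simp add: norm_mult norm_divide norm_power del: pochhammer_Suc fact_Suc power_Suc)
  have 2: "norm (tt a 1 (Suc n)) / Re c = A / (Re c * fact (Suc n) * fact (Suc n) * 2 ^ Suc n)"
    unfolding tt_def A_def by (simp add: norm_mult norm_divide norm_power pochhammer_fact[symmetric]
       del: pochhammer_Suc fact_Suc power_Suc)
  have le: "Re c * fact (Suc n) * fact (Suc n) * 2 ^ Suc n \<le> norm (pochhammer c (Suc n)) * fact (Suc n) * 2 ^ Suc n"
    using poch_lower[OF R, of n] by (intro mult_right_mono) auto
  have pos: "0 < Re c * fact (Suc n) * fact (Suc n) * (2::real) ^ Suc n" using R by simp
  have X: "0 < norm (pochhammer c (Suc n)) * fact (Suc n) * 2 ^ Suc n"
    by (rule less_le_trans[OF pos le])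
  have A0: "0 \<le> A" by (simp add: A_def)
  show ?thesis unfolding 1 2
    by (rule divide_left_mono[OF le A0 mult_pos_pos[OF X pos]])
qed

lemma FF_lim: "(\<lambda>K. FF a (b + 2 * of_nat K)) \<longlonglongrightarrow> 1"
proof -
  define g where "g n = norm (tt a 1 (Suc n))" for n
  have gs: "summable g" unfolding g_def
    using tt_norm_summable[of a 1] by (subst summable_Suc_iff)
  define C where "C = suminf g"
  have ev: "eventually (\<lambda>K. 1 \<le> Re b + 2 * real K) at_top" by real_asymp
  have "eventually (\<lambda>K. norm (FF a (b + 2 * of_nat K) - 1) \<le> C / (Re b + 2 * real K)) at_top"
    using ev
  proof eventually_elim
    case (elim K)
    define c where "c = b + 2 * of_nat K"
    have R: "Re c \<ge> 1" "Re c = Re b + 2 * real K" using elim by (simp_all add: c_def)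
    have "FF a c - 1 = (\<Sum>n. tt a c (Suc n))"
      unfolding FF_def using suminf_split_head[OF tt_summable[of a c]] by simp
    also have "norm \<dots> \<le> (\<Sum>n. g n / Re c)"
      by (rule norm_suminf_le[OF _ summable_divide[OF gs]]) (simp add: g_def tt_bound[OF R(1)])
    also have "\<dots> = C / Re c" unfolding C_def by (rule suminf_divide[OF gs])
    finally show ?case by (simp add: c_def R(2))
  qed
  moreover have "(\<lambda>K. C / (Re b + 2 * real K)) \<longlonglongrightarrow> 0" by real_asymp
  ultimately have "(\<lambda>K. FF a (b + 2 * of_nat K) - 1) \<longlonglongrightarrow> 0" by (rule Lim_null_comparison)
  then show ?thesis by (rule LIM_zero_cancel)
qed

lemma poch_nz2: "z \<notin> \<int>\<^sub>\<le>\<^sub>0 \<Longrightarrow> pochhammer (z::complex) n \<noteq> 0"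
  by (auto simp: pochhammer_eq_0_iff)

lemma series_prod_eq:
  fixes A B G E f x y u r :: complex
  assumes "x * y = u * r" and "f \<noteq> 0" and "x \<noteq> 0" and "y \<noteq> 0"
  shows "A/(f*x) * (B/(f*y)) * (f*u/G) * (f*r/E) = A*B/(G*E)"
proof -
  have h: "f * inverse f = 1" "x * inverse x = 1" "y * inverse y = 1" using assms by simp_all
  show ?thesis unfolding divide_inverse inverse_mult_distrib using h assms(1) by algebra
qed

lemma gauss2:
  assumes b: "b \<notin> \<int>"
  shows "FF a b = Gamma (b/2) * Gamma ((b+1)/2) * rGamma ((a+b)/2) * rGamma ((1-a+b)/2)"
proof -
  define \<alpha> where "\<alpha> = (a+b)/2"
  define \<beta> where "\<beta> = (1-a+b)/2"
  define \<gamma> where "\<gamma> = b/2"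
  define \<delta> where "\<delta> = (b+1)/2"
  have b0: "b \<notin> \<int>\<^sub>\<le>\<^sub>0" using b nonpos_Ints_subset_Ints by blast
  have g0: "\<gamma> \<notin> \<int>\<^sub>\<le>\<^sub>0"
  proof
    assume "\<gamma> \<in> \<int>\<^sub>\<le>\<^sub>0"
    then have "2 * \<gamma> \<in> \<int>" using nonpos_Ints_subset_Ints by auto
    then show False using b by (simp add: \<gamma>_def)
  qed
  have d0: "\<delta> \<notin> \<int>\<^sub>\<le>\<^sub>0"
  proof
    assume "\<delta> \<in> \<int>\<^sub>\<le>\<^sub>0"
    then have "2 * \<delta> - 1 \<in> \<int>" using nonpos_Ints_subset_Ints by auto
    moreover have "2 * \<delta> - 1 = b" unfolding \<delta>_def by (simp add: field_simps)
    ultimately show False using b by simp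
  qed
  define P where "P K = rGamma_series \<alpha> K * rGamma_series \<beta> K * Gamma_series \<gamma> K * Gamma_series \<delta> K" for K
  have eq: "P K * FF a (b + 2 * of_nat (Suc K)) = FF a b" for K
  proof -
    define L where "L = (of_real (ln (of_nat K)) :: complex)"
    have it: "pochhammer \<gamma> (Suc K) * pochhammer \<delta> (Suc K) * FF a b =
         pochhammer \<alpha> (Suc K) * pochhammer \<beta> (Suc K) * FF a (b + 2 * of_nat (Suc K))"
      using FF_iter[OF b0, of "Suc K" a] by (simp add: \<alpha>_def \<beta>_def \<gamma>_def \<delta>_def)
    have nz: "pochhammer \<gamma> (Suc K) * pochhammer \<delta> (Suc K) \<noteq> 0"
      using poch_nz2[OF g0] poch_nz2[OF d0] by simp
    have "exp (\<alpha> * L) * exp (\<beta> * L) = exp (\<gamma> * L) * exp (\<delta> * L)"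
    proof -
      have s: "\<alpha> + \<beta> = \<gamma> + \<delta>" by (simp add: \<alpha>_def \<beta>_def \<gamma>_def \<delta>_def field_simps)
      show ?thesis unfolding exp_add[symmetric] distrib_right[symmetric] s ..
    qed
    then have "P K = pochhammer \<alpha> (Suc K) * pochhammer \<beta> (Suc K) / (pochhammer \<gamma> (Suc K) * pochhammer \<delta> (Suc K))"
      unfolding P_def rGamma_series_def Gamma_series_def L_def[symmetric] Suc_eq_plus1[symmetric]
      by (intro series_prod_eq) simp_all
    then have h1: "P K * (pochhammer \<gamma> (Suc K) * pochhammer \<delta> (Suc K)) = pochhammer \<alpha> (Suc K) * pochhammer \<beta> (Suc K)"
      using nz by simp
    have "(P K * FF a (b + 2 * of_nat (Suc K)) - FF a b) * (pochhammer \<gamma> (Suc K) * pochhammer \<delta> (Suc K)) = 0"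
      using h1 it by algebra
    then show ?thesis using nz by simp
  qed
  have "(\<lambda>K. P K * FF a (b + 2 * of_nat (Suc K))) \<longlonglongrightarrow>
      rGamma \<alpha> * rGamma \<beta> * Gamma \<gamma> * Gamma \<delta> * 1"
    unfolding P_def
    by (intro tendsto_intros LIMSEQ_Suc[OF FF_lim])
  then have "FF a b = rGamma \<alpha> * rGamma \<beta> * Gamma \<gamma> * Gamma \<delta>"
    unfolding eq by (simp add: LIMSEQ_const_iff)
  then show ?thesis by (simp add: \<alpha>_def \<beta>_def \<gamma>_def \<delta>_def mult_ac)
qed

lemma term_eq:
  fixes w z :: complex and n :: nat
  assumes c: "w + z - 1/2 \<notin> \<int>"
  shows "Gamma (w + z - of_nat n - 1/2) / (2 ^ n * of_nat (fact n)) * pochhammer (w - z - of_nat n + 1/2) (2 * n)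
       = Gamma (w + z - 1/2) * tt (w - z + 1/2) (3/2 - w - z) n"
proof -
  define c where "c = w + z - 1/2"
  define a where "a = w - z + 1/2"
  have e1: "w + z - of_nat n - 1/2 = c - of_nat n" "w - z - of_nat n + 1/2 = a - of_nat n"
    "3/2 - w - z = 1 - c" by (simp_all add: c_def a_def algebra_simps)
  have cn: "c - of_nat n \<notin> \<int>\<^sub>\<le>\<^sub>0"
  proof
    assume "c - of_nat n \<in> \<int>\<^sub>\<le>\<^sub>0"
    then have "c - of_nat n + of_nat n \<in> \<int>" using nonpos_Ints_subset_Ints by auto
    then show False using c by (simp add: c_def)
  qed
  have g1: "pochhammer (c - of_nat n) n = Gamma c / Gamma (c - of_nat n)"
    using pochhammer_Gamma[OF cn, of n] by simp
  have gnz: "Gamma (c - of_nat n) \<noteq> 0" using Gamma_nonzero[OF cn] .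
  have g2: "Gamma (c - of_nat n) = Gamma c / pochhammer (c - of_nat n) n"
    using g1 gnz poch_nz2[OF cn, of n] by (simp add: field_simps)
  have m1: "pochhammer (c - of_nat n) n = (-1)^n * pochhammer (1 - c) n"
    using pochhammer_minus[of "of_nat n - c" n] by (simp add: algebra_simps)
  have m2: "pochhammer (a - of_nat n) n = (-1)^n * pochhammer (1 - a) n"
    using pochhammer_minus[of "of_nat n - a" n] by (simp add: algebra_simps)
  have p2: "pochhammer (a - of_nat n) (2 * n) = pochhammer (a - of_nat n) n * pochhammer a n"
    using pochhammer_product'[of "a - of_nat n" n n] by (simp add: mult_2)
  have sq: "((-1::complex)^n) * (-1)^n = 1" by (simp add: power_mult_distrib[symmetric])
  have inv: "inverse ((-1::complex)^n) = (-1)^n" by (simp add: power_inverse[symmetric])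
  have "Gamma (c - of_nat n) / (2 ^ n * fact n) * pochhammer (a - of_nat n) (2 * n)
      = Gamma c * ((-1)^n * (-1)^n) * (pochhammer a n * pochhammer (1 - a) n) / (pochhammer (1 - c) n * fact n * 2^n)"
    unfolding g2 m1 p2 m2 by (simp only: divide_inverse inverse_mult_distrib mult_ac inv)
  then show ?thesis unfolding e1 sq by (simp add: tt_def a_def c_def)
qed

theorem mainTheorem2:
  fixes w z :: complex
  assumes "w \<notin> \<int>\<^sub>\<le>\<^sub>0" and "z \<notin> \<int>\<^sub>\<le>\<^sub>0"
    and "w + z - 1/2 \<notin> \<int>"
  shows "(\<lambda>n::nat. Gamma (w + z - of_nat n - 1/2) / (2 ^ n * of_nat (fact n))
              * pochhammer (w - z - of_nat n + 1/2) (2 * n))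
         sums (1 / of_real (sqrt (2 * pi)) * ((2::complex) powr (w + z) * Gamma w * Gamma z)
               * (- (sin (of_real pi * w) * sin (of_real pi * z)) / cos (of_real pi * (w + z))))"
proof -
  define c where "c = w + z - 1/2"
  define a where "a = w - z + 1/2"
  define b where "b = 3/2 - w - z"
  have cZ: "c \<notin> \<int>" using assms(3) by (simp add: c_def)
  have bZ: "b \<notin> \<int>"
  proof
    assume "b \<in> \<int>"
    then have "1 - b \<in> \<int>" by auto
    moreover have "1 - b = c" by (simp add: b_def c_def algebra_simps)
    ultimately show False using cZ by simp
  qed
  have "(tt a b) sums FF a b" unfolding FF_def by (rule summable_sums[OF tt_summable])
  then have S: "(\<lambda>n::nat. Gamma (w + z - of_nat n - 1/2) / (2 ^ n * of_nat (fact n))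
              * pochhammer (w - z - of_nat n + 1/2) (2 * n)) sums (Gamma c * FF a b)"
    unfolding term_eq[OF assms(3)] a_def[symmetric] b_def[symmetric] c_def[symmetric]
    by (rule sums_mult)
  have ab1: "(a+b)/2 = 1 - z" "(1-a+b)/2 = 1 - w" "(b+1)/2 = b/2 + 1/2" "1 - 2 * (b/2) = c" "2 * (b/2) = b"
    by (simp_all add: a_def b_def c_def field_simps)
  have f1: "FF a b = Gamma (b/2) * Gamma (b/2 + 1/2) * rGamma (1 - z) * rGamma (1 - w)"
    using gauss2[OF bZ, of a] unfolding ab1 .
  have h0: "b/2 \<notin> \<int>\<^sub>\<le>\<^sub>0"
  proof
    assume "b/2 \<in> \<int>\<^sub>\<le>\<^sub>0"
    then have "b/2 \<in> \<int>" using nonpos_Ints_subset_Ints by blast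
    then have "2 * (b/2) \<in> \<int>" by (intro Ints_mult) auto
    then show False using bZ ab1(5) by simp
  qed
  have h1: "b/2 + 1/2 \<notin> \<int>\<^sub>\<le>\<^sub>0"
  proof
    assume "b/2 + 1/2 \<in> \<int>\<^sub>\<le>\<^sub>0"
    then have "b/2 + 1/2 \<in> \<int>" using nonpos_Ints_subset_Ints by blast
    then have "2 * (b/2 + 1/2) - 1 \<in> \<int>" by (intro Ints_mult Ints_diff) auto
    moreover have "2 * (b/2 + 1/2) - 1 = b" by (simp add: field_simps)
    ultimately show False using bZ by simp
  qed
  define L where "L = (of_real (ln 2) :: complex)"
  have f2: "Gamma (b/2) * Gamma (b/2 + 1/2) = exp (c * L) * of_real (sqrt pi) * Gamma b"
  proof -
    have bc: "1 - b = c" by (simp add: b_def c_def algebra_simps)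
    show ?thesis unfolding L_def using Gamma_legendre_duplication[OF h0 h1] bc by simp
  qed
  have f3: "Gamma c * Gamma b = of_real pi * inverse (sin (of_real pi * c))"
  proof -
    have "b = 1 - c" by (simp add: b_def c_def algebra_simps)
    then have "Gamma c * Gamma b = of_real pi / sin (of_real pi * c)"
      using Gamma_reflection_complex[of c] by simp
    then show ?thesis by (simp only: divide_inverse)
  qed
  have rr: "rGamma (1 - x) = sin (of_real pi * x) * Gamma x * inverse (of_real pi)"
    if "x \<notin> \<int>\<^sub>\<le>\<^sub>0" for x :: complex
  proof -
    have "Gamma x * rGamma x = 1" using that by (simp add: Gamma_def rGamma_eq_zero_iff)
    then have "rGamma (1 - x) = Gamma x * (rGamma x * rGamma (1 - x))" by (simp add: mult.assoc[symmetric])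
    also have "\<dots> = Gamma x * (sin (of_real pi * x) / of_real pi)" by (simp add: rGamma_reflection_complex)
    finally show ?thesis by (simp only: divide_inverse mult_ac)
  qed
  have f4: "rGamma (1 - z) = sin (of_real pi * z) * Gamma z * inverse (of_real pi)" by (rule rr[OF assms(2)])
  have f5: "rGamma (1 - w) = sin (of_real pi * w) * Gamma w * inverse (of_real pi)" by (rule rr[OF assms(1)])
  have lnr: "exp (ln 2 / 2) = sqrt (2::real)"
    using powr_half_sqrt[of 2] by (simp add: powr_def)
  have f6: "exp (c * L) = exp ((w + z) * L) * inverse (of_real (sqrt 2))"
  proof -
    have "c * L = (w + z) * L - of_real (ln 2 / 2)" by (simp add: c_def L_def algebra_simps)
    moreover have "exp (of_real (ln 2 / 2) :: complex) = of_real (sqrt 2)" by (simp only: exp_of_real lnr)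
    ultimately have "exp (c * L) = exp ((w + z) * L) / of_real (sqrt 2)" by (simp only: exp_diff)
    then show ?thesis by (simp only: divide_inverse)
  qed
  have f7: "cos (of_real pi * (w + z)) = - sin (of_real pi * c)"
  proof -
    have "of_real pi * c = of_real pi * (w + z) - of_real pi / 2" by (simp add: c_def algebra_simps)
    then show ?thesis by (simp add: sin_diff)
  qed
  have f8: "(2::complex) powr (w + z) = exp ((w + z) * L)"
  proof -
    have "ln (2::complex) = L" using Ln_of_real[of 2] by (simp add: L_def)
    then show ?thesis by (simp add: powr_def)
  qed
  have f9: "of_real (sqrt (2 * pi)) = of_real (sqrt 2) * (of_real (sqrt pi) :: complex)"
    by (simp add: real_sqrt_mult)
  have n1: "of_real pi * inverse (of_real pi :: complex) = 1" "of_real (sqrt pi) * of_real (sqrt pi) = (of_real pi :: complex)"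
    "of_real (sqrt 2) * inverse (of_real (sqrt 2) :: complex) = 1"
    "of_real (sqrt pi) * inverse (of_real (sqrt pi) :: complex) = 1"
    by (simp_all flip: of_real_mult)
  have "Gamma c * FF a b = 1 / of_real (sqrt (2 * pi)) * ((2::complex) powr (w + z) * Gamma w * Gamma z)
               * (- (sin (of_real pi * w) * sin (of_real pi * z)) / cos (of_real pi * (w + z)))"
  proof -
    have V: "Gamma c * FF a b = (Gamma c * Gamma b) * exp (c * L) * of_real (sqrt pi) * rGamma (1 - z) * rGamma (1 - w)"
      unfolding f1 f2 by (simp only: mult_ac)
    show ?thesis
      unfolding V f3 f4 f5 f6 f8 f9 f7 divide_inverse inverse_mult_distrib inverse_minus_eq
      using n1 by algebra
  qed
  then show ?thesis using S by simp
qed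

end
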